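(* (i) There exists a distribution $F$ supported on $[0,\infty)$ with $F\in\mathcal{S}_{loc}$ which is not locally almost decreasing. (ii) There exists a distribution $F$ supported on $[0,\infty)$ with $F\in\mathcal{L}_{loc}\setminus\mathcal{S}_{loc}$ which is not locally almost decreasing.
   Context: For a distribution $F$ and $d>0$ write $F(x+\Delta_d):=F((x,x+d])$, and $F^{*2}$ for the convolution of $F$ with itself; $a(x)\sim b(x)$ means $a(x)/b(x)\to1$ as $x\to\infty$. For $d>0$, $F\in\mathcal{L}_{\Delta_d}$ if $F(x+\Delta_d)>0$ for all sufficiently large $x$ and for every constant $t>0$, $F(x+s+\Delta_d)\sim F(x+\Delta_d)$ as $x\to\infty$ uniformly in $|s|\le t$; $F\in\mathcal{S}_{\Delta_d}$ if $F\in\mathcal{L}_{\Delta_d}$ and $F^{*2}(x+\Delta_d)\sim 2F(x+\Delta_d)$. $\mathcal{L}_{loc}$ (resp. $\mathcal{S}_{loc}$) is the class of $F$ with $F\in\mathcal{L}_{\Delta_d}$ (resp. $F\in\mathcal{S}_{\Delta_d}$) for every $d>0$. $F$ is called locally almost decreasing if there is a constant $x_0\ge0$ such that for every $d>0$, $F(x+\Delta_d)>0$ for all $x\ge x_0$ and $\sup_{x_0\le x\le y<\infty} F(y+\Delta_d)/F(x+\Delta_d)<\infty$. *)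

theory Defs
  imports "HOL-Probability.Probability"
begin

text \<open>Distributions are probability measures on the Borel sets of the reals
 (locale real_distribution). F(x+Delta_d) = F((x,x+d]).\<close>

definition Fint :: "real measure \<Rightarrow> real \<Rightarrow> real \<Rightarrow> real" where
  "Fint F d x = measure F {x<..x+d}"

definition L_Delta :: "real measure \<Rightarrow> real \<Rightarrow> bool" where
  "L_Delta F d \<longleftrightarrow>
     (\<forall>\<^sub>F x in at_top. Fint F d x > 0) \<and>
     (\<forall>t>0. \<forall>e>0. \<forall>\<^sub>F x in at_top. \<forall>s. \<bar>s\<bar> \<le> t \<longrightarrow>
        \<bar>Fint F d (x + s) / Fint F d x - 1\<bar> \<le> e)"

definition S_Delta :: "real measure \<Rightarrow> real \<Rightarrow> bool" where
  "S_Delta F d \<longleftrightarrow> L_Delta F d \<and>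
     ((\<lambda>x. Fint (F \<star> F) d x / (2 * Fint F d x)) \<longlongrightarrow> 1) at_top"

definition L_loc :: "real measure \<Rightarrow> bool" where
  "L_loc F \<longleftrightarrow> (\<forall>d>0. L_Delta F d)"

definition S_loc :: "real measure \<Rightarrow> bool" where
  "S_loc F \<longleftrightarrow> (\<forall>d>0. S_Delta F d)"

definition loc_almost_decreasing :: "real measure \<Rightarrow> bool" where
  "loc_almost_decreasing F \<longleftrightarrow>
     (\<exists>x0\<ge>0. \<forall>d>0. (\<forall>x\<ge>x0. Fint F d x > 0) \<and>
        (\<exists>C. \<forall>x y. x0 \<le> x \<and> x \<le> y \<longrightarrow> Fint F d y / Fint F d x \<le> C))"

end

theory Submission
  imports Defs "HOL-Real_Asymp.Real_Asymp"
begin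


lemma rd_sets_pair:
  assumes "real_distribution F"
  shows "sets (F \<Otimes>\<^sub>M F) = sets (borel \<Otimes>\<^sub>M (borel :: real measure))"
  using assms real_distribution.events_eq_borel by (intro sets_pair_measure_cong) auto

lemma conv_Fint_emeasure:
  assumes F: "real_distribution F" and d: "d \<ge> 0"
  shows "ennreal (Fint (F \<star> F) d x) = emeasure (F \<Otimes>\<^sub>M F) {p. x < fst p + snd p \<and> fst p + snd p \<le> x + d}"
proof -
  interpret real_distribution F by fact
  interpret P: pair_prob_space F F by unfold_locales
  have ms: "measurable (F \<Otimes>\<^sub>M F) = measurable (borel \<Otimes>\<^sub>M borel)"
    by (intro ext measurable_cong_sets rd_sets_pair[OF F] refl)
  have meas: "(\<lambda>(x::real, y). x + y) \<in> borel_measurable (F \<Otimes>\<^sub>M F)"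
    unfolding ms by measurable
  have "Fint (F \<star> F) d x = measure (F \<Otimes>\<^sub>M F) ((\<lambda>(x, y). x + y) -` {x<..x+d} \<inter> space (F \<Otimes>\<^sub>M F))"
    unfolding Fint_def convolution_def by (subst measure_distr[OF meas]) auto
  also have "(\<lambda>(x, y). x + y) -` {x<..x+d} \<inter> space (F \<Otimes>\<^sub>M F) = {p. x < fst p + snd p \<and> fst p + snd p \<le> x + d}"
    by (auto simp: space_pair_measure)
  finally show ?thesis using P.emeasure_eq_measure by simp
qed



lemma Rset_sets:
  assumes F: "real_distribution F"
  shows "{p. x < fst p + snd p \<and> fst p + snd p \<le> x + d \<and> snd p \<le> B} \<in> sets (F \<Otimes>\<^sub>M F)"
    and "{p. x < fst p + snd p \<and> fst p + snd p \<le> x + d \<and> fst p \<le> B} \<in> sets (F \<Otimes>\<^sub>M F)"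
    and "{p. x < fst p + snd p \<and> fst p + snd p \<le> x + d} \<in> sets (F \<Otimes>\<^sub>M F)"
proof -
  have sp: "\<And>P. {p. P p} = {p \<in> space (borel \<Otimes>\<^sub>M (borel::real measure)). P p}"
    by (simp add: space_pair_measure)
  show "{p. x < fst p + snd p \<and> fst p + snd p \<le> x + d \<and> snd p \<le> B} \<in> sets (F \<Otimes>\<^sub>M F)"
    "{p. x < fst p + snd p \<and> fst p + snd p \<le> x + d \<and> fst p \<le> B} \<in> sets (F \<Otimes>\<^sub>M F)"
    "{p. x < fst p + snd p \<and> fst p + snd p \<le> x + d} \<in> sets (F \<Otimes>\<^sub>M F)"
    unfolding rd_sets_pair[OF F] by (subst sp; measurable)+
qed

lemma Ioc_shift: "{y. x < y + v \<and> y + v \<le> x + d} = {x - v<..x - v + (d::real)}"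
  by auto
lemma Ioc_shift': "{y. x < v + y \<and> v + y \<le> x + d} = {x - v<..x - v + (d::real)}"
  by auto

lemma J_v:
  assumes F: "real_distribution F"
  shows "emeasure (F \<Otimes>\<^sub>M F) {p. x < fst p + snd p \<and> fst p + snd p \<le> x + d \<and> snd p \<le> B}
     = (\<integral>\<^sup>+v. indicator {..B} v * ennreal (Fint F d (x - v)) \<partial>F)"
proof -
  interpret real_distribution F by fact
  interpret P: pair_prob_space F F by unfold_locales
  show ?thesis
    apply (subst P.emeasure_pair_measure_alt2[OF Rset_sets(1)[OF F]])
    apply (rule nn_integral_cong)
    apply (auto simp: indicator_def Fint_def emeasure_eq_measure Ioc_shift)
    done
qed

lemma J_u:
  assumes F: "real_distribution F"
  shows "emeasure (F \<Otimes>\<^sub>M F) {p. x < fst p + snd p \<and> fst p + snd p \<le> x + d \<and> fst p \<le> B}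
     = (\<integral>\<^sup>+v. indicator {..B} v * ennreal (Fint F d (x - v)) \<partial>F)"
proof -
  interpret real_distribution F by fact
  interpret P: pair_prob_space F F by unfold_locales
  show ?thesis
    apply (subst emeasure_pair_measure_alt[OF Rset_sets(2)[OF F]])
    apply (rule nn_integral_cong)
    apply (auto simp: indicator_def Fint_def emeasure_eq_measure Ioc_shift')
    done
qed



lemma AE_nonneg:
  assumes F: "real_distribution F" and neg: "measure F {..<0} = 0"
  shows "AE v in F. v \<ge> (0::real)"
proof -
  interpret real_distribution F by fact
  have "{..<0} \<in> null_sets F" using neg by (simp add: null_sets_def emeasure_eq_measure)
  then show ?thesis by (rule AE_I') auto
qed

lemma S_from_L:
  assumes F: "real_distribution F" and neg: "measure F {..<0} = 0" and d: "d > 0" and L: "L_Delta F d"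
   and K: "K \<ge> 0" and KX: "\<And>x w. x \<ge> X \<Longrightarrow> (x-d)/2 \<le> w \<Longrightarrow> w \<le> x \<Longrightarrow> Fint F d w \<le> K * Fint F d x"
  shows "S_Delta F d"
  unfolding S_Delta_def
proof (intro conjI L tendstoI)
  interpret real_distribution F by fact
  interpret P: pair_prob_space F F by unfold_locales
  fix e :: real assume e: "e > 0"
  define \<eta> where "\<eta> = min e 1/4"
  have \<eta>: "\<eta> > 0" using e by (simp add: \<eta>_def)
  have \<eta>1: "\<eta> \<le> 1/4" "2*\<eta> < e" using e by (auto simp: \<eta>_def)
  have "1 - \<eta>/(K+1) < 1" using \<eta> K by simp
  from order_tendstoD(1)[OF cdf_lim_at_top_prob this]
  have "\<forall>\<^sub>F A in at_top. cdf F A > 1 - \<eta>/(K+1)" .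
  then obtain N where N: "\<And>A. A \<ge> N \<Longrightarrow> cdf F A > 1 - \<eta>/(K+1)"
    unfolding eventually_at_top_linorder by blast
  define A where "A = max N 0"
  have A0: "A \<ge> 0" and cA: "cdf F A > 1 - \<eta>/(K+1)" using N[of A] by (auto simp: A_def)
  define p where "p = measure F {..A}"
  define q where "q = measure F {A<..}"
  have pq: "p + q = 1"
  proof -
    have "p + q = measure F ({..A} \<union> {A<..})"
      unfolding p_def q_def by (subst finite_measure_Union) auto
    also have "{..A} \<union> {A<..} = space F" by auto
    finally show ?thesis using prob_space by simp
  qed
  have q\<eta>: "q \<le> \<eta>/(K+1)" using cA pq unfolding cdf_def p_def by simp
  have q0: "q \<ge> 0" unfolding q_def by simp
  have Kq: "K * q \<le> \<eta>"
  proof -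
    have "K * q \<le> K * (\<eta>/(K+1))" using mult_left_mono[OF q\<eta> K] by simp
    also have "\<dots> \<le> \<eta>" using K \<eta> by (simp add: field_simps)
    finally show ?thesis .
  qed
  have q\<eta>': "q \<le> \<eta>"
  proof -
    have "\<eta>/(K+1) \<le> \<eta>" using K \<eta> by (simp add: field_simps)
    then show ?thesis using q\<eta> by simp
  qed
  have L1: "\<forall>\<^sub>F x in at_top. Fint F d x > 0" and
       L2: "\<forall>\<^sub>F x in at_top. \<forall>s. \<bar>s\<bar> \<le> A + 1 \<longrightarrow> \<bar>Fint F d (x + s) / Fint F d x - 1\<bar> \<le> \<eta>"
    using L \<eta> A0 unfolding L_Delta_def by auto
  have ev: "\<forall>\<^sub>F x in at_top. x \<ge> X \<and> x \<ge> 2*A + 1"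
    by (intro eventually_conj eventually_ge_at_top)
  show "\<forall>\<^sub>F x in at_top. dist (Fint (F \<star> F) d x / (2 * Fint F d x)) 1 < e"
    using L1 L2 ev
  proof eventually_elim
    case (elim x)
    note xe = elim
    define a where "a = Fint F d x"
    have a: "a > 0" using elim by (simp add: a_def)
    have near: "(1-\<eta>)*a \<le> Fint F d (x - v) \<and> Fint F d (x - v) \<le> (1+\<eta>)*a" if "0 \<le> v" "v \<le> A" for v
    proof -
      have "\<bar>Fint F d (x + (-v)) / a - 1\<bar> \<le> \<eta>" using elim(2)[rule_format, of "-v"] that unfolding a_def by simp
      then have "\<bar>Fint F d (x - v) - a\<bar> \<le> \<eta> * a" using a
        by (simp add: abs_le_iff field_simps)
      then show ?thesis by (simp add: abs_le_iff algebra_simps)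
    qed
    define R where "R = {p. x < fst p + snd p \<and> fst p + snd p \<le> x + d}"
    define Rv where "Rv B = {p. x < fst p + snd p \<and> fst p + snd p \<le> x + d \<and> snd p \<le> B}" for B
    define Ru where "Ru B = {p. x < fst p + snd p \<and> fst p + snd p \<le> x + d \<and> fst p \<le> B}" for B
    define J where "J B = (\<integral>\<^sup>+v. indicator {..B} v * ennreal (Fint F d (x - v)) \<partial>F)" for B
    have eR: "ennreal (Fint (F \<star> F) d x) = emeasure (F \<Otimes>\<^sub>M F) R"
      unfolding R_def using conv_Fint_emeasure[OF F] d by simp
    have eRv: "emeasure (F \<Otimes>\<^sub>M F) (Rv B) = J B" for B
      unfolding Rv_def J_def by (rule J_v[OF F])
    have eRu: "emeasure (F \<Otimes>\<^sub>M F) (Ru B) = J B" for B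
      unfolding Ru_def J_def by (rule J_u[OF F])
    have sR: "Rv B \<in> sets (F \<Otimes>\<^sub>M F)" "Ru B \<in> sets (F \<Otimes>\<^sub>M F)" "R \<in> sets (F \<Otimes>\<^sub>M F)" for B
      unfolding R_def Rv_def Ru_def using Rset_sets[OF F] by auto
    have JA: "J A \<ge> ennreal ((1-\<eta>)*a) * ennreal p"
    proof -
      have "(\<integral>\<^sup>+v. ennreal ((1-\<eta>)*a) * indicator {..A} v \<partial>F) \<le> J A"
        unfolding J_def
      proof (rule nn_integral_mono_AE)
        show "AE v in F. ennreal ((1-\<eta>)*a) * indicator {..A} v \<le> indicator {..A} v * ennreal (Fint F d (x - v))"
          using AE_nonneg[OF F neg]
        proof eventually_elim
          case (elim v) then show ?case using near[of v]
            by (auto simp: indicator_def intro!: ennreal_leI)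
        qed
      qed
      moreover have "(\<integral>\<^sup>+v. ennreal ((1-\<eta>)*a) * indicator {..A} v \<partial>F) = ennreal ((1-\<eta>)*a) * ennreal p"
        by (subst nn_integral_cmult_indicator) (auto simp: p_def emeasure_eq_measure)
      ultimately show ?thesis by simp
    qed
    have disj: "Rv A \<inter> Ru A = {}" using elim unfolding Rv_def Ru_def by auto
    have "emeasure (F \<Otimes>\<^sub>M F) (Rv A) + emeasure (F \<Otimes>\<^sub>M F) (Ru A) = emeasure (F \<Otimes>\<^sub>M F) (Rv A \<union> Ru A)"
      by (rule plus_emeasure[OF sR(1) sR(2) disj])
    also have "\<dots> \<le> emeasure (F \<Otimes>\<^sub>M F) R"
      by (rule emeasure_mono[OF _ sR(3)]) (auto simp: Rv_def Ru_def R_def)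
    finally have calc: "emeasure (F \<Otimes>\<^sub>M F) (Rv A) + emeasure (F \<Otimes>\<^sub>M F) (Ru A) \<le> emeasure (F \<Otimes>\<^sub>M F) R" .
    have low: "2 * (ennreal ((1-\<eta>)*a) * ennreal p) \<le> ennreal (Fint (F \<star> F) d x)"
    proof -
      have "2 * (ennreal ((1-\<eta>)*a) * ennreal p) = ennreal ((1-\<eta>)*a) * ennreal p + ennreal ((1-\<eta>)*a) * ennreal p"
        by (rule mult_2)
      also have "\<dots> \<le> J A + J A" by (intro add_mono JA)
      also have "\<dots> \<le> ennreal (Fint (F \<star> F) d x)" using calc eR eRv eRu by simp
      finally show ?thesis .
    qed
    have p01: "0 \<le> p" "p \<le> 1" using pq q0 by (auto simp: p_def)
    have lowr: "2 * ((1-\<eta>)*a * p) \<le> Fint (F \<star> F) d x"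
    proof -
      have "ennreal (2 * ((1-\<eta>)*a * p)) = 2 * (ennreal ((1-\<eta>)*a) * ennreal p)"
        using a p01 \<eta>1 by (simp add: ennreal_mult)
      then have "ennreal (2 * ((1-\<eta>)*a * p)) \<le> ennreal (Fint (F \<star> F) d x)" using low by simp
      moreover have "Fint (F \<star> F) d x \<ge> 0" by (simp add: Fint_def)
      ultimately show ?thesis by (simp add: ennreal_le_iff)
    qed
    define B where "B = (x + d)/2"
    have JB: "J B \<le> ennreal ((1+\<eta>)*a) * ennreal p + ennreal (K*a) * ennreal q"
    proof -
      have "J B \<le> (\<integral>\<^sup>+v. ennreal ((1+\<eta>)*a) * indicator {..A} v + ennreal (K*a) * indicator {A<..} v \<partial>F)"
        unfolding J_def
      proof (rule nn_integral_mono_AE)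
        show "AE v in F. indicator {..B} v * ennreal (Fint F d (x - v)) \<le> ennreal ((1+\<eta>)*a) * indicator {..A} v + ennreal (K*a) * indicator {A<..} v"
          using AE_nonneg[OF F neg]
        proof eventually_elim
          case (elim v)
          show ?case
          proof (cases "v \<le> A")
            case True
            then show ?thesis using near[of v] elim by (auto simp: indicator_def intro!: ennreal_leI)
          next
            case False
            show ?thesis
            proof (cases "v \<le> B")
              case True
              have "Fint F d (x - v) \<le> K * a" unfolding a_def
                using KX[of x "x - v"] elim True xe by (auto simp: B_def)
              then show ?thesis using False True by (auto simp: indicator_def intro!: ennreal_leI)
            next
              case False
              then show ?thesis by (auto simp: indicator_def)
            qed
          qed
        qed
      qed
      also have "\<dots> = ennreal ((1+\<eta>)*a) * ennreal p + ennreal (K*a) * ennreal q"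
        by (subst nn_integral_add) (auto simp: p_def q_def emeasure_eq_measure nn_integral_cmult_indicator)
      finally show ?thesis .
    qed
    have "emeasure (F \<Otimes>\<^sub>M F) R \<le> emeasure (F \<Otimes>\<^sub>M F) (Rv B \<union> Ru B)"
      by (rule emeasure_mono[OF _ sets.Un[OF sR(1) sR(2)]]) (auto simp: Rv_def Ru_def R_def B_def)
    also have "\<dots> \<le> emeasure (F \<Otimes>\<^sub>M F) (Rv B) + emeasure (F \<Otimes>\<^sub>M F) (Ru B)"
      by (rule emeasure_subadditive[OF sR(1) sR(2)])
    finally have up: "ennreal (Fint (F \<star> F) d x) \<le> 2 * (ennreal ((1+\<eta>)*a) * ennreal p + ennreal (K*a) * ennreal q)"
      using eR eRv eRu JB by (metis mult_2 add_mono order_trans)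
    have upr: "Fint (F \<star> F) d x \<le> 2 * ((1+\<eta>)*a*p + K*a*q)"
    proof -
      have "2 * (ennreal ((1+\<eta>)*a) * ennreal p + ennreal (K*a) * ennreal q) = ennreal (2 * ((1+\<eta>)*a*p + K*a*q))"
        using a p01 \<eta> K q0 by (simp add: ennreal_mult ennreal_plus)
      with up have "ennreal (Fint (F \<star> F) d x) \<le> ennreal (2 * ((1+\<eta>)*a*p + K*a*q))"
        by (rule ord_le_eq_trans)
      moreover have "0 \<le> 2 * ((1+\<eta>)*a*p + K*a*q)" using a p01 \<eta> K q0 by simp
      ultimately show ?thesis using ennreal_le_iff by blast
    qed
    define r where "r = Fint (F \<star> F) d x / (2 * a)"
    have r1: "(1-\<eta>)*p \<le> r" using lowr a unfolding r_def by (simp add: field_simps)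
    have r2: "r \<le> (1+\<eta>)*p + K*q" using upr a unfolding r_def by (simp add: field_simps)
    have "(1-\<eta>)*(1-\<eta>) \<le> (1-\<eta>)*p" using pq q\<eta>' \<eta>1 by (intro mult_left_mono) auto
    moreover have "(1-\<eta>)*(1-\<eta>) = 1 - 2*\<eta> + \<eta>*\<eta>" by algebra
    moreover have "\<eta>*\<eta> \<ge> 0" by simp
    ultimately have "1 - 2*\<eta> \<le> r" using r1 by linarith
    moreover have "r \<le> 1 + 2*\<eta>"
    proof -
      have "(1+\<eta>)*p \<le> (1+\<eta>)*1" using p01 \<eta> by (intro mult_left_mono) auto
      then show ?thesis using r2 Kq by simp
    qed
    ultimately have "dist r 1 < e" using \<eta>1 unfolding dist_real_def by linarith
    then show ?case unfolding r_def a_def .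

  qed
qed



lemma conv_box:
  assumes F: "real_distribution F"
  shows "(Fint F (1/2) (x/2))^2 \<le> Fint (F \<star> F) 1 x"
proof -
  interpret real_distribution F by fact
  interpret P: pair_prob_space F F by unfold_locales
  define I where "I = {x/2<..x/2 + 1/2}"
  have "ennreal ((Fint F (1/2) (x/2))^2) = emeasure F I * emeasure F I"
    by (simp add: I_def Fint_def emeasure_eq_measure power2_eq_square ennreal_mult)
  also have "\<dots> = emeasure (F \<Otimes>\<^sub>M F) (I \<times> I)"
    by (rule emeasure_pair_measure_Times[symmetric]) (auto simp: I_def)
  also have "\<dots> \<le> emeasure (F \<Otimes>\<^sub>M F) {p. x < fst p + snd p \<and> fst p + snd p \<le> x + 1}"
    by (rule emeasure_mono[OF _ Rset_sets(3)[OF F]]) (auto simp: I_def)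
  also have "\<dots> = ennreal (Fint (F \<star> F) 1 x)"
    using conv_Fint_emeasure[OF F, of 1 x] by simp
  finally show ?thesis by (simp add: ennreal_le_iff Fint_def)
qed

lemma tc:
  fixes \<tau> :: "real \<Rightarrow> real"
  assumes mono: "\<And>x y. x \<le> y \<Longrightarrow> \<tau> x \<le> \<tau> y" and rc: "\<And>a. continuous (at_right a) \<tau>"
    and z: "\<And>x. x \<le> 0 \<Longrightarrow> \<tau> x = 0" and lim: "filterlim \<tau> at_top at_top"
  shows "real_distribution (interval_measure (\<lambda>x. 1 - 1/(1 + \<tau> x)))"
    and "measure (interval_measure (\<lambda>x. 1 - 1/(1 + \<tau> x))) {..<0} = 0"
    and "d \<ge> 0 \<Longrightarrow> Fint (interval_measure (\<lambda>x. 1 - 1/(1 + \<tau> x))) d x = (\<tau>(x+d) - \<tau> x)/((1+\<tau> x)*(1+\<tau>(x+d)))"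
proof -
  have nn: "\<tau> x \<ge> 0" for x
    using mono[of 0 x] z[of 0] z[of x] by (cases "x \<le> 0") auto
  define \<Phi> where "\<Phi> = (\<lambda>x. 1 - 1/(1 + \<tau> x))"
  have m: "\<Phi> x \<le> \<Phi> y" if "x \<le> y" for x y
    using mono[OF that] nn[of x] nn[of y] unfolding \<Phi>_def by (simp add: frac_le)
  have r: "continuous (at_right a) \<Phi>" for a
    unfolding \<Phi>_def using rc[of a] nn[of a]
    by (intro continuous_intros) (auto simp: add_nonneg_eq_0_iff)
  have b: "(\<Phi> \<longlongrightarrow> 0) at_bot"
  proof (rule tendsto_eventually)
    show "\<forall>\<^sub>F x in at_bot. \<Phi> x = 0"
      unfolding eventually_at_bot_linorder using z by (auto simp: \<Phi>_def intro!: exI[of _ 0])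
  qed
  have t: "(\<Phi> \<longlongrightarrow> 1) at_top"
  proof -
    have "filterlim (\<lambda>x. 1 + \<tau> x) at_top at_top"
      by (rule filterlim_tendsto_add_at_top[OF tendsto_const lim])
    then have "((\<lambda>x. 1/(1 + \<tau> x)) \<longlongrightarrow> 0) at_top"
      by (rule tendsto_divide_0[OF tendsto_const filterlim_at_top_imp_at_infinity])
    then have "((\<lambda>x. 1 - 1/(1 + \<tau> x)) \<longlongrightarrow> 1 - 0) at_top"
      by (intro tendsto_intros)
    then show ?thesis unfolding \<Phi>_def by simp
  qed
  show "real_distribution (interval_measure (\<lambda>x. 1 - 1/(1 + \<tau> x)))"
    using real_distribution_interval_measure[of \<Phi>, OF m r b t] by (simp add: \<Phi>_def)
  have "measure (interval_measure \<Phi>) {..<0} \<le> measure (interval_measure \<Phi>) {..0}"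
    using real_distribution_interval_measure[of \<Phi>, OF m r b t]
    by (intro finite_measure.finite_measure_mono) (auto simp: real_distribution_def prob_space_def)
  also have "\<dots> = \<Phi> 0" by (rule measure_interval_measure_Iic[OF m r b])
  also have "\<dots> = 0" using z[of 0] by (simp add: \<Phi>_def)
  finally show "measure (interval_measure (\<lambda>x. 1 - 1/(1 + \<tau> x))) {..<0} = 0"
    by (simp add: \<Phi>_def measure_nonneg antisym)
  assume d: "d \<ge> 0"
  have "Fint (interval_measure \<Phi>) d x = \<Phi> (x+d) - \<Phi> x"
    unfolding Fint_def using d by (intro measure_interval_measure_Ioc m r) auto
  also have "\<dots> = (\<tau>(x+d) - \<tau> x)/((1+\<tau> x)*(1+\<tau>(x+d)))"
    using nn[of x] nn[of "x+d"] unfolding \<Phi>_def by (simp add: field_simps)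
  finally show "Fint (interval_measure (\<lambda>x. 1 - 1/(1 + \<tau> x))) d x = (\<tau>(x+d) - \<tau> x)/((1+\<tau> x)*(1+\<tau>(x+d)))"
    by (simp add: \<Phi>_def)
qed



lemma L_by_bounds:
  assumes pos: "\<forall>\<^sub>F x in at_top. Fint F d x > 0"
  and bnd: "\<And>t. t > 0 \<Longrightarrow> \<exists>lo hi. ((\<lambda>x. hi x / lo x) \<longlongrightarrow> 1) at_top \<and>
      (\<forall>\<^sub>F x in at_top. lo x > 0 \<and> (\<forall>s. \<bar>s\<bar> \<le> t \<longrightarrow> lo x \<le> Fint F d (x+s) \<and> Fint F d (x+s) \<le> hi x))"
  shows "L_Delta F d"
  unfolding L_Delta_def
proof (intro conjI pos allI impI)
  fix t e :: real assume t: "t > 0" and e: "e > 0"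
  obtain lo hi where lim: "((\<lambda>x. hi x / lo x) \<longlongrightarrow> 1) at_top" and
    ev: "\<forall>\<^sub>F x in at_top. lo x > 0 \<and> (\<forall>s. \<bar>s\<bar> \<le> t \<longrightarrow> lo x \<le> Fint F d (x+s) \<and> Fint F d (x+s) \<le> hi x)"
    using bnd[OF t] by blast
  have ev2: "\<forall>\<^sub>F x in at_top. hi x / lo x < 1 + e"
    using order_tendstoD(2)[OF lim] e by simp
  show "\<forall>\<^sub>F x in at_top. \<forall>s. \<bar>s\<bar> \<le> t \<longrightarrow> \<bar>Fint F d (x + s) / Fint F d x - 1\<bar> \<le> e"
    using ev ev2
  proof eventually_elim
    case (elim x)
    show ?case
    proof (intro allI impI)
      fix s assume s: "\<bar>s\<bar> \<le> t"
      have lo: "lo x > 0" using elim by auto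
      have b1: "lo x \<le> Fint F d (x+s)" "Fint F d (x+s) \<le> hi x" using elim s by auto
      have b0: "lo x \<le> Fint F d x" "Fint F d x \<le> hi x" using elim(1) t by (auto dest: spec[of _ 0])
      have hi: "hi x > 0" using lo b0 by linarith
      have r1: "Fint F d (x+s) / Fint F d x \<le> hi x / lo x"
        using b1 b0 lo by (intro frac_le) auto
      have r2: "lo x / hi x \<le> Fint F d (x+s) / Fint F d x"
        using b1 b0 lo by (intro frac_le) auto
      have "lo x / hi x = 1 / (hi x / lo x)" by simp
      also have "\<dots> \<ge> 1 / (1 + e)" using elim(2) lo hi e by (intro divide_left_mono) (auto intro!: mult_pos_pos divide_pos_pos)
      finally have "lo x / hi x \<ge> 1/(1+e)" .
      moreover have "1/(1+e) \<ge> 1 - e"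
      proof -
        have "(1-e)*(1+e) \<le> 1" by (simp add: algebra_simps)
        then show ?thesis using e by (simp add: field_simps)
      qed
      ultimately show "\<bar>Fint F d (x + s) / Fint F d x - 1\<bar> \<le> e"
        using r1 r2 elim(2) by (simp add: abs_le_iff)
    qed
  qed
qed



definition tau1 :: "real \<Rightarrow> real" where
  "tau1 x = (if x \<le> 0 then 0 else
     of_int \<lfloor>x\<rfloor> + max 0 (x - of_int \<lfloor>x\<rfloor> - 1/(of_int \<lfloor>x\<rfloor> + 2)) / (1 - 1/(of_int \<lfloor>x\<rfloor> + 2)))"

lemma tau1_piece:
  fixes n :: int and r :: real
  assumes n: "n \<ge> 0" and r: "0 \<le> r" "r < 1"
  defines "g \<equiv> 1/(of_int n + 2)"
  shows "of_int n \<le> of_int n + max 0 (r - g)/(1 - g)"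
    and "of_int n + max 0 (r - g)/(1 - g) \<le> of_int n + r"
    and "of_int n + r - 1/(of_int n + 1) \<le> of_int n + max 0 (r - g)/(1 - g)"
    and "of_int n + max 0 (r - g)/(1 - g) \<le> of_int n + 1"
proof -
  have g: "0 < g" "g \<le> 1/2" using n by (auto simp: g_def field_simps)
  have g1: "1 - g > 0" using g by simp
  have gg: "g/(1-g) = 1/(of_int n + 1)" using n by (simp add: g_def field_simps)
  show "of_int n \<le> of_int n + max 0 (r - g)/(1 - g)" using g1 by simp
  show "of_int n + max 0 (r - g)/(1 - g) \<le> of_int n + r"
  proof (cases "r \<le> g")
    case True then show ?thesis using r by simp
  next
    case False
    have "r*g \<le> 1*g" using r g by (intro mult_right_mono) auto
    then have "r - g \<le> r*(1-g)" by (simp add: algebra_simps)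
    then have "(r - g)/(1-g) \<le> r" by (subst pos_divide_le_eq[OF g1])
    then show ?thesis using False by simp
  qed
  show "of_int n + r - 1/(of_int n + 1) \<le> of_int n + max 0 (r - g)/(1 - g)"
  proof (cases "r \<le> g")
    case True
    have "g \<le> g/(1-g)" using g g1 by (simp add: field_simps)
    then show ?thesis using True gg by simp
  next
    case False
    have "r - g/(1-g) \<le> (r - g)/(1-g)"
    proof -
      have e1: "g/(1-g)*(1-g) = g" using g1 by simp
      have "(r - g/(1-g))*(1-g) = r*(1-g) - g" using e1 by (simp add: left_diff_distrib)
      also have "\<dots> \<le> r - g" using r g by (simp add: algebra_simps)
      finally show ?thesis by (subst pos_le_divide_eq[OF g1])
    qed
    then show ?thesis using False gg by simp
  qed
  show "of_int n + max 0 (r - g)/(1 - g) \<le> of_int n + 1"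
  proof (cases "r \<le> g")
    case True then show ?thesis by simp
  next
    case False
    have "(r - g)/(1-g) \<le> 1" using g1 r by (simp add: field_simps)
    then show ?thesis using False by simp
  qed
qed

lemma tau1_bounds:
  assumes "x > 0"
  shows "tau1 x \<le> x" "x - 1/x \<le> tau1 x" "x - 1 \<le> tau1 x" "of_int \<lfloor>x\<rfloor> \<le> tau1 x" "tau1 x \<le> of_int \<lfloor>x\<rfloor> + 1"
proof -
  define n where "n = \<lfloor>x\<rfloor>"
  define r where "r = x - of_int n"
  have n: "n \<ge> 0" using assms by (simp add: n_def)
  have r: "0 \<le> r" "r < 1" unfolding r_def n_def by linarith+
  have xe: "x = of_int n + r" by (simp add: r_def)
  have t: "tau1 x = of_int n + max 0 (r - 1/(of_int n + 2))/(1 - 1/(of_int n + 2))"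
    using assms unfolding tau1_def n_def r_def by simp
  note P = tau1_piece[OF n r]
  show "tau1 x \<le> x" using P(2) t xe by simp
  have "1/(of_int n + 1) \<le> 1/x" using assms r xe by (intro divide_left_mono) auto
  then show "x - 1/x \<le> tau1 x" using P(3) t xe by simp
  have "1/(of_int n + 1) \<le> (1::real)" using n by (simp add: divide_le_eq)
  then show "x - 1 \<le> tau1 x" using P(3) t xe by simp
  show "of_int \<lfloor>x\<rfloor> \<le> tau1 x" using P(1) t n_def by simp
  show "tau1 x \<le> of_int \<lfloor>x\<rfloor> + 1" using P(4) t n_def by simp
qed

lemma tau1_nonpos: "x \<le> 0 \<Longrightarrow> tau1 x = 0" by (simp add: tau1_def)

lemma tau1_nonneg: "tau1 x \<ge> 0"
  using tau1_bounds(4)[of x] by (cases "x \<le> 0") (auto simp: tau1_def)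

lemma tau1_mono: assumes "x \<le> y" shows "tau1 x \<le> tau1 y"
proof (cases "x \<le> 0")
  case True then show ?thesis using tau1_nonneg[of y] by (simp add: tau1_def)
next
  case False
  then have x: "x > 0" and y: "y > 0" using assms by auto
  show ?thesis
  proof (cases "\<lfloor>x\<rfloor> = \<lfloor>y\<rfloor>")
    case True
    define n where "n = \<lfloor>x\<rfloor>"
    have n: "n \<ge> 0" using x by (simp add: n_def)
    define g where "g = 1/(of_int n + 2::real)"
    have g1: "1 - g > 0" using n by (simp add: g_def field_simps)
    have "max 0 (x - of_int n - g) \<le> max 0 (y - of_int n - g)" using assms by simp
    then have "max 0 (x - of_int n - g)/(1-g) \<le> max 0 (y - of_int n - g)/(1-g)"
      using g1 by (simp add: divide_right_mono)
    then show ?thesis using x y True unfolding tau1_def n_def g_def by simp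
  next
    case False
    then have "\<lfloor>x\<rfloor> + 1 \<le> \<lfloor>y\<rfloor>" using assms floor_mono[OF assms] by simp
    then have "of_int \<lfloor>x\<rfloor> + 1 \<le> (of_int \<lfloor>y\<rfloor> :: real)" by linarith
    then show ?thesis using tau1_bounds(5)[OF x] tau1_bounds(4)[OF y] by linarith
  qed
qed

lemma tau1_rc: "continuous (at_right a) tau1"
proof -
  define n where "n = \<lfloor>max a 0\<rfloor>"
  define h where "h y = of_int n + max 0 (y - of_int n - 1/(of_int n + 2)) / (1 - 1/(of_int n + 2))" for y :: real
  have n0: "n \<ge> 0" by (simp add: n_def)
  have hc: "continuous (at_right a) h" unfolding h_def using n0 by (intro continuous_intros) (auto simp: field_simps)
  show ?thesis
  proof (cases "a < 0")
    case True
    have "\<forall>\<^sub>F y in at_right a. tau1 y = 0"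
      unfolding eventually_at_right[OF True] using True by (auto simp: tau1_def intro!: exI[of _ 0])
    then have "\<forall>\<^sub>F y in at_right a. tau1 y = tau1 a"
      by eventually_elim (use True in \<open>simp add: tau1_def\<close>)
    then show ?thesis unfolding continuous_within by (rule tendsto_eventually)
  next
    case False
    then have n: "n = \<lfloor>a\<rfloor>" "n \<ge> 0" by (auto simp: n_def)
    have lt: "a < of_int n + 1" using n by linarith
    have ev: "\<forall>\<^sub>F y in at_right a. tau1 y = h y"
      unfolding eventually_at_right[OF lt]
    proof (intro exI[of _ "of_int n + 1"] conjI allI impI)
      fix y assume y: "a < y" "y < of_int n + 1"
      then have "\<lfloor>y\<rfloor> = n" using n False by (intro floor_unique) (auto, linarith)
      then show "tau1 y = h y" using y False by (simp add: tau1_def h_def)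
    qed (use lt in auto)
    have ha: "tau1 a = h a"
    proof (cases "a = 0")
      case True then show ?thesis using n by (simp add: tau1_def h_def)
    next
      case False then show ?thesis using n \<open>\<not> a < 0\<close> by (simp add: tau1_def h_def)
    qed
    have "(h \<longlongrightarrow> h a) (at_right a)" using hc unfolding continuous_within .
    moreover have "\<forall>\<^sub>F y in at_right a. h y = tau1 y" using ev by (rule eventually_mono) simp
    ultimately have "(tau1 \<longlongrightarrow> h a) (at_right a)" by (rule Lim_transform_eventually)
    then show ?thesis unfolding continuous_within ha .
  qed
qed



definition F1 :: "real measure" where
  "F1 = interval_measure (\<lambda>x. 1 - 1/(1 + tau1 x))"

lemma tau1_lim: "filterlim tau1 at_top at_top"
proof (rule filterlim_at_top_mono[of "\<lambda>x. x - 1"])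
  show "filterlim (\<lambda>x::real. x - 1) at_top at_top" by real_asymp
  show "\<forall>\<^sub>F x in at_top. x - 1 \<le> tau1 x"
    using eventually_gt_at_top[of 0] by eventually_elim (rule tau1_bounds(3))
qed

lemmas F1_tc = tc[of tau1, OF tau1_mono tau1_rc tau1_nonpos tau1_lim, folded F1_def]

lemma F1_dist: "real_distribution F1" and F1_neg: "measure F1 {..<0} = 0"
  using F1_tc by auto

lemma F1_Fint: "d \<ge> 0 \<Longrightarrow> Fint F1 d x = (tau1 (x+d) - tau1 x)/((1 + tau1 x)*(1 + tau1 (x+d)))"
  using F1_tc(3) by simp

lemma F1_bounds:
  assumes y: "y \<ge> 1" and d: "d > 0"
  shows "(d - 1/y)/((1+y)*(1+y+d)) \<le> Fint F1 d y" "d - 1/y > 0 \<Longrightarrow> (d - 1/y)/((1+y)*(1+y+d)) \<le> Fint F1 d y"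
    and "Fint F1 d y \<le> (d + 1/y)/(y*(y+d))"
proof -
  have y0: "y > 0" "y + d > 0" using y d by auto
  note b1 = tau1_bounds[OF y0(1)] and b2 = tau1_bounds[OF y0(2)]
  have "1/(y+d) \<le> 1/y" using y d by (intro divide_left_mono) auto
  then have Nlo: "d - 1/y \<le> tau1 (y+d) - tau1 y" using b1 b2 by linarith
  have Nhi: "tau1 (y+d) - tau1 y \<le> d + 1/y" using b1 b2 by linarith
  have D1: "y \<le> 1 + tau1 y" "1 + tau1 y \<le> 1 + y" using b1 by linarith+
  have D2: "y + d \<le> 1 + tau1 (y+d)" "1 + tau1 (y+d) \<le> 1 + y + d" using b2 by linarith+
  have F: "Fint F1 d y = (tau1 (y+d) - tau1 y)/((1 + tau1 y)*(1 + tau1 (y+d)))"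
    using F1_Fint d by simp
  have den: "y*(y+d) \<le> (1 + tau1 y)*(1 + tau1 (y+d))" "(1 + tau1 y)*(1 + tau1 (y+d)) \<le> (1+y)*(1+y+d)"
    using D1 D2 y0 by (intro mult_mono; linarith)+
  have Npos: "tau1 (y+d) - tau1 y \<ge> 0" using tau1_mono[of y "y+d"] d by simp
  show up: "Fint F1 d y \<le> (d + 1/y)/(y*(y+d))"
    unfolding F using Nhi den y0 Npos by (intro frac_le) auto
  show lo: "d - 1/y > 0 \<Longrightarrow> (d - 1/y)/((1+y)*(1+y+d)) \<le> Fint F1 d y"
  proof -
    have dp: "(1 + tau1 y)*(1 + tau1(y+d)) > 0"
      using tau1_nonneg[of y] tau1_nonneg[of "y+d"] by (simp add: add_pos_nonneg)
    show ?thesis unfolding F by (rule frac_le[OF Npos Nlo dp den(2)])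
  qed
  show "(d - 1/y)/((1+y)*(1+y+d)) \<le> Fint F1 d y"
  proof (cases "d - 1/y > 0")
    case True then show ?thesis by (rule lo)
  next
    case False
    then have "(d - 1/y)/((1+y)*(1+y+d)) \<le> 0" using y0 by (intro divide_nonpos_pos) auto
    also have "0 \<le> Fint F1 d y" by (simp add: Fint_def)
    finally show ?thesis .
  qed
qed



lemma F1_L: assumes d: "d > 0" shows "L_Delta F1 d"
proof (rule L_by_bounds)
  show "\<forall>\<^sub>F x in at_top. Fint F1 d x > 0"
    using eventually_ge_at_top[of "1 + 2/d"]
  proof eventually_elim
    case (elim x)
    have x1: "x \<ge> 1" using elim d by (smt (verit) divide_pos_pos)
    have "2/d \<le> x" using elim d by (smt (verit) divide_pos_pos)
    then have "1/x \<le> d/2" using d x1 by (simp add: field_simps)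
    then have p: "d - 1/x > 0" using d by linarith
    have "0 < (d - 1/x)/((1+x)*(1+x+d))" using p x1 d by simp
    also have "\<dots> \<le> Fint F1 d x" by (rule F1_bounds(1)[OF x1 d])
    finally show ?case .
  qed
next
  fix t :: real assume t: "t > 0"
  define lo where "lo x = (d - 1/(x-t))/((1+x+t)*(1+x+t+d))" for x
  define hi where "hi x = (d + 1/(x-t))/((x-t)*(x-t+d))" for x
  have lim: "((\<lambda>x. hi x / lo x) \<longlongrightarrow> 1) at_top"
    unfolding lo_def hi_def using d t by real_asymp
  have ev: "\<forall>\<^sub>F x in at_top. lo x > 0 \<and> (\<forall>s. \<bar>s\<bar> \<le> t \<longrightarrow> lo x \<le> Fint F1 d (x+s) \<and> Fint F1 d (x+s) \<le> hi x)"
    using eventually_ge_at_top[of "t + 1 + 2/d"]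
  proof eventually_elim
    case (elim x)
    have dd: "2/d > 0" using d by simp
    have xt: "x - t \<ge> 1" using elim dd by linarith
    have "2/d \<le> x - t" using elim by linarith
    then have "1/(x-t) \<le> d/2" using d xt by (simp add: field_simps)
    then have p: "d - 1/(x-t) > 0" using d by linarith
    have lop: "lo x > 0" unfolding lo_def using p t xt d by simp
    show ?case
    proof (intro conjI allI impI lop)
      fix s assume s: "\<bar>s\<bar> \<le> t"
      define y where "y = x + s"
      have y: "x - t \<le> y" "y \<le> x + t" using s by (auto simp: y_def abs_le_iff)
      have y1: "y \<ge> 1" using y xt by linarith
      have iy: "1/y \<le> 1/(x-t)" using y xt by (intro divide_left_mono) auto
      have "lo x \<le> (d - 1/y)/((1+y)*(1+y+d))" unfolding lo_def
      proof (rule frac_le)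
        show "0 \<le> d - 1/y" using p iy by linarith
        show "d - 1/(x-t) \<le> d - 1/y" using iy by linarith
        show "0 < (1+y)*(1+y+d)" using y1 d by simp
        show "(1+y)*(1+y+d) \<le> (1+x+t)*(1+x+t+d)" using y y1 d by (intro mult_mono) auto
      qed
      also have "\<dots> \<le> Fint F1 d y" by (rule F1_bounds(1)[OF y1 d])
      finally show "lo x \<le> Fint F1 d (x+s)" by (simp add: y_def)
      have "Fint F1 d y \<le> (d + 1/y)/(y*(y+d))" by (rule F1_bounds(3)[OF y1 d])
      also have "\<dots> \<le> hi x" unfolding hi_def
      proof (rule frac_le)
        show "0 \<le> d + 1/(x-t)" using d xt by simp
        show "d + 1/y \<le> d + 1/(x-t)" using iy by linarith
        show "0 < (x-t)*(x-t+d)" using xt d by simp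
        show "(x-t)*(x-t+d) \<le> y*(y+d)" using y xt d by (intro mult_mono) auto
      qed
      finally show "Fint F1 d (x+s) \<le> hi x" by (simp add: y_def)
    qed
  qed
  from lim ev show "\<exists>lo hi. ((\<lambda>x. hi x / lo x) \<longlongrightarrow> 1) at_top \<and>
      (\<forall>\<^sub>F x in at_top. lo x > 0 \<and> (\<forall>s. \<bar>s\<bar> \<le> t \<longrightarrow> lo x \<le> Fint F1 d (x+s) \<and> Fint F1 d (x+s) \<le> hi x))"
    by blast
qed

lemma F1_K:
  assumes d: "d > 0" and x: "x \<ge> 3*d + 2 + 2/d" and w: "(x-d)/2 \<le> w" "w \<le> x"
  shows "Fint F1 d w \<le> (32*(d+1)/d) * Fint F1 d x"
proof -
  have dd: "2/d > 0" using d by simp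
  define a where "a = x - d"
  define b where "b = 1 + x + d"
  have a1: "a \<ge> 2" unfolding a_def using x dd d by linarith
  have a2: "b \<le> 2*a"
  proof -
    have "2*a = 2*x - 2*d" by (simp add: a_def algebra_simps)
    then show ?thesis unfolding b_def using x dd d by linarith
  qed
  have a3: "b > 0" unfolding b_def using x dd d by linarith
  note a = a1 a2 a3
  have w1: "w \<ge> 1" using w a by (simp add: a_def)
  have x1: "x \<ge> 1" using x dd d by linarith
  have "2/d \<le> x" using x d by linarith
  then have "1/x \<le> d/2" using d x1 by (simp add: field_simps)
  then have p: "d/2 \<le> d - 1/x" by linarith
  have "Fint F1 d w \<le> (d + 1/w)/(w*(w+d))" by (rule F1_bounds(3)[OF w1 d])
  also have "\<dots> \<le> (d+1)/((a/2)*(a/2))"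
  proof (rule frac_le)
    show "0 \<le> d + 1" using d by simp
    show "d + 1/w \<le> d + 1" using w1 by simp
    show "0 < (a/2)*(a/2)" using a by simp
    show "(a/2)*(a/2) \<le> w*(w+d)" using w a d by (intro mult_mono) (auto simp: a_def)
  qed
  also have "\<dots> = 16*(d+1)/(4*(a*a))" using a by (simp add: field_simps)
  also have "\<dots> \<le> 16*(d+1)/(b*b)"
  proof (rule divide_left_mono)
    show "b*b \<le> 4*(a*a)" using a mult_mono[OF a(2) a(2)] by simp
    show "0 \<le> 16*(d+1)" using d by simp
    show "0 < 4*(a*a)*(b*b)" using a by simp
  qed
  also have "\<dots> = (32*(d+1)/d) * ((d/2)/(b*b))" using d a by (simp add: field_simps)
  also have "\<dots> \<le> (32*(d+1)/d) * Fint F1 d x"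
  proof (rule mult_left_mono)
    show "0 \<le> 32*(d+1)/d" using d by simp
    have "(d/2)/(b*b) \<le> (d - 1/x)/((1+x)*(1+x+d))"
    proof (rule frac_le)
      show "0 \<le> d - 1/x" using p d by linarith
      show "d/2 \<le> d - 1/x" by (rule p)
      show "0 < (1+x)*(1+x+d)" using x1 d by simp
      show "(1+x)*(1+x+d) \<le> b*b" unfolding b_def using x1 d by (intro mult_mono) auto
    qed
    also have "\<dots> \<le> Fint F1 d x" by (rule F1_bounds(1)[OF x1 d])
    finally show "(d/2)/(b*b) \<le> Fint F1 d x" .
  qed
  finally show ?thesis .
qed

lemma F1_S: "S_loc F1"
  unfolding S_loc_def
proof (intro allI impI)
  fix d :: real assume d: "d > 0"
  show "S_Delta F1 d"
    by (rule S_from_L[OF F1_dist F1_neg d F1_L[OF d], of "32*(d+1)/d" "3*d + 2 + 2/d"])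
       (use d F1_K in auto)
qed

lemma F1_flat: "Fint F1 (1/(real n + 2)) (real n) = 0"
proof -
  have fl: "\<lfloor>real n + 1/(real n + 2)\<rfloor> = int n"
    by (intro floor_unique) (auto simp: field_simps)
  have t1: "tau1 (real n) = real n" by (cases n) (auto simp: tau1_def)
  have pos: "real n + 1/(real n + 2) > 0" by (intro add_nonneg_pos) auto
  have t2: "tau1 (real n + 1/(real n + 2)) = real n"
    unfolding tau1_def using fl pos by auto
  show ?thesis by (subst F1_Fint) (auto simp: t1 t2)
qed

lemma F1_not_lad: "\<not> loc_almost_decreasing F1"
proof
  assume "loc_almost_decreasing F1"
  then obtain x0 where x0: "x0 \<ge> 0" and H: "\<And>d. d > 0 \<Longrightarrow> (\<forall>x\<ge>x0. Fint F1 d x > 0)"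
    unfolding loc_almost_decreasing_def by blast
  define n where "n = nat \<lceil>x0\<rceil>"
  have "real n \<ge> x0" unfolding n_def by linarith
  then have "Fint F1 (1/(real n + 2)) (real n) > 0" using H[of "1/(real n + 2)"] by auto
  then show False using F1_flat by simp
qed



definition rho2 :: "real \<Rightarrow> real" where
  "rho2 x = 12 * ln (max 0 x + 2) * max 0 (cos (pi * log 2 (max 0 x + 2)))"
definition sig2 :: "real \<Rightarrow> real" where "sig2 x = exp (- rho2 x)"
definition tau2 :: "real \<Rightarrow> real" where "tau2 x = integral {0..x} sig2"

lemma rho2_nonneg: "rho2 x \<ge> 0"
  unfolding rho2_def by (intro mult_nonneg_nonneg) auto

lemma sig2_pos: "sig2 x > 0" and sig2_le1: "sig2 x \<le> 1"
  unfolding sig2_def using rho2_nonneg[of x] by auto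

lemma sig2_cont: "continuous_on S sig2"
  unfolding sig2_def rho2_def
  by (intro continuous_intros) (auto intro!: add_nonneg_pos)

lemma sig2_int: "sig2 integrable_on {a..b}"
  by (rule integrable_continuous_interval[OF sig2_cont])

lemma integral_bounds:
  assumes "x \<le> y" "\<And>u. x \<le> u \<Longrightarrow> u \<le> y \<Longrightarrow> m \<le> sig2 u \<and> sig2 u \<le> M"
  shows "m * (y - x) \<le> integral {x..y} sig2" "integral {x..y} sig2 \<le> M * (y - x)"
proof -
  have "integral {x..y} (\<lambda>_. m) \<le> integral {x..y} sig2"
    using assms by (intro integral_le sig2_int) auto
  then show "m * (y - x) \<le> integral {x..y} sig2" using assms(1) by (simp add: mult.commute)
  have "integral {x..y} sig2 \<le> integral {x..y} (\<lambda>_. M)"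
    using assms by (intro integral_le sig2_int) auto
  then show "integral {x..y} sig2 \<le> M * (y - x)" using assms(1) by (simp add: mult.commute)
qed

lemma tau2_nonpos: "x \<le> 0 \<Longrightarrow> tau2 x = 0"
  unfolding tau2_def by (cases "x = 0") auto

lemma tau2_diff: assumes "0 \<le> x" "x \<le> y" shows "tau2 y - tau2 x = integral {x..y} sig2"
  unfolding tau2_def using Henstock_Kurzweil_Integration.integral_combine[OF assms sig2_int] by simp

lemma tau2_inc: assumes "0 \<le> x" "x \<le> y" shows "0 \<le> tau2 y - tau2 x" "tau2 y - tau2 x \<le> y - x"
  using integral_bounds[of x y 0 1] assms tau2_diff[OF assms] sig2_pos sig2_le1
  by (auto simp: less_imp_le)

lemma tau2_nonneg: "tau2 x \<ge> 0"
  using tau2_inc(1)[of 0 x] tau2_nonpos[of x] tau2_nonpos[of 0] by (cases "x \<le> 0") auto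

lemma tau2_le: "x \<ge> 0 \<Longrightarrow> tau2 x \<le> x"
  using tau2_inc(2)[of 0 x] tau2_nonpos[of 0] by auto

lemma tau2_mono: assumes "x \<le> y" shows "tau2 x \<le> tau2 y"
proof (cases "x \<le> 0")
  case True then show ?thesis using tau2_nonpos[of x] tau2_nonneg[of y] by simp
next
  case False then show ?thesis using tau2_inc(1)[of x y] assms by simp
qed

lemma tau2_rc: "continuous (at_right a) tau2"
proof (cases "a < 0")
  case True
  have "\<forall>\<^sub>F y in at_right a. tau2 y = tau2 a"
    unfolding eventually_at_right[OF True] using True
    by (auto simp: tau2_nonpos intro!: exI[of _ 0])
  then show ?thesis unfolding continuous_within by (rule tendsto_eventually)
next
  case False
  have "continuous_on {0..a+1} tau2"
    unfolding tau2_def by (rule indefinite_integral_continuous_1[OF sig2_int])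
  then have "continuous_on {a..a+1} tau2" by (rule continuous_on_subset) (use False in auto)
  then have "continuous (at a within {a..a+1}) tau2"
    by (simp add: continuous_on_eq_continuous_within)
  then show ?thesis using at_within_Icc_at_right[of a "a+1"] by simp
qed

lemma cos_band:
  fixes m :: nat and z :: real
  assumes z: "2^m \<le> z" "z \<le> 2^m * (5/4)"
  shows "even m \<Longrightarrow> cos (pi * log 2 z) \<ge> 1/2" "odd m \<Longrightarrow> cos (pi * log 2 z) \<le> -1/2"
proof -
  have zp: "z > 0" using z(1) by (smt (verit) zero_less_power)
  define \<theta> where "\<theta> = log 2 z - real m"
  have l1: "real m \<le> log 2 z"
  proof -
    have "log 2 (2^m) \<le> log 2 z" using z zp by (subst log_le_cancel_iff) auto
    then show ?thesis by (simp add: log_nat_power)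
  qed
  have l54: "log 2 (5/4) \<le> 1/3"
  proof -
    have "3 * log 2 (5/4) = log 2 ((5/4)^3)" by (simp add: log_nat_power)
    also have "\<dots> \<le> log 2 2" by (subst log_le_cancel_iff) (auto simp: power_divide divide_le_eq)
    finally show ?thesis by simp
  qed
  have l2: "log 2 z \<le> real m + 1/3"
  proof -
    have "log 2 z \<le> log 2 (2^m * (5/4))" using z zp by (subst log_le_cancel_iff) auto
    also have "\<dots> = real m + log 2 (5/4)" by (subst log_mult) (auto simp: log_nat_power)
    finally show ?thesis using l54 by simp
  qed
  have th: "0 \<le> \<theta>" "\<theta> \<le> 1/3" using l1 l2 by (auto simp: \<theta>_def)
  have c: "cos (pi * log 2 z) = (-1)^m * cos (pi * \<theta>)"
  proof -
    have "pi * log 2 z = real m * pi + pi * \<theta>" by (simp add: \<theta>_def algebra_simps)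
    then show ?thesis by (simp add: cos_add cos_npi sin_npi)
  qed
  have "cos (pi / 3) \<le> cos (pi * \<theta>)"
    using th by (intro cos_monotone_0_pi_le) (auto simp: field_simps)
  then have c2: "cos (pi * \<theta>) \<ge> 1/2" by (simp add: cos_60)
  show "even m \<Longrightarrow> cos (pi * log 2 z) \<ge> 1/2" using c c2 by simp
  show "odd m \<Longrightarrow> cos (pi * log 2 z) \<le> -1/2" using c c2 by simp
qed

lemma sig2_odd:
  fixes m :: nat
  assumes "odd m" "u \<ge> 0" "2^m \<le> u + 2" "u + 2 \<le> 2^m * (5/4)"
  shows "sig2 u = 1"
proof -
  have "cos (pi * log 2 (u+2)) \<le> -1/2" using cos_band(2)[OF assms(3,4) assms(1)] .
  then have "rho2 u = 0" using assms(2) unfolding rho2_def by simp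
  then show ?thesis by (simp add: sig2_def)
qed

lemma sig2_even:
  fixes m :: nat
  assumes "even m" "u \<ge> 0" "2^m \<le> u + 2" "u + 2 \<le> 2^m * (5/4)"
  shows "sig2 u \<le> 1 / (u+2)^6"
proof -
  have c: "cos (pi * log 2 (u+2)) \<ge> 1/2" using cos_band(1)[OF assms(3,4) assms(1)] .
  have l: "ln (u+2) \<ge> 0" using assms(2) by simp
  have "6 * ln (u+2) \<le> rho2 u"
  proof -
    have "12 * ln (u+2) * (1/2) \<le> 12 * ln (u+2) * max 0 (cos (pi * log 2 (u+2)))"
      using c l by (intro mult_left_mono) auto
    then show ?thesis using assms(2) unfolding rho2_def by simp
  qed
  then have "sig2 u \<le> exp (- (6 * ln (u+2)))" unfolding sig2_def by simp
  also have "exp (- (6 * ln (u+2))) = 1 / (u+2)^6"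
  proof -
    have "exp (6 * ln (u+2)) = exp (ln (u+2)) ^ 6" using exp_of_nat_mult[of 6 "ln (u+2)"] by simp
    also have "\<dots> = (u+2)^6" using assms(2) by simp
    finally show ?thesis by (simp add: exp_minus field_simps)
  qed
  finally show ?thesis .
qed



lemma cos_lip: "\<bar>cos A - cos B\<bar> \<le> \<bar>A - (B::real)\<bar>"
proof -
  have "\<bar>cos A - cos B\<bar> = 2 * \<bar>sin ((A+B)/2)\<bar> * \<bar>sin ((B-A)/2)\<bar>"
    by (simp add: cos_diff_cos abs_mult)
  also have "\<dots> \<le> 2 * 1 * \<bar>(B-A)/2\<bar>"
    by (intro mult_mono abs_sin_le_one abs_sin_x_le_abs_x) auto
  finally show ?thesis by simp
qed

lemma max0_lip: "\<bar>max 0 p - max 0 q\<bar> \<le> \<bar>p - (q::real)\<bar>"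
  by (auto simp: max_def abs_if)

lemma ln_lip:
  fixes a u v :: real
  assumes "0 \<le> a" "a \<le> u" "a \<le> v"
  shows "\<bar>ln (u+2) - ln (v+2)\<bar> \<le> \<bar>u - v\<bar>/(a+2)"
proof -
  have *: "\<bar>ln (u+2) - ln (v+2)\<bar> \<le> \<bar>u - v\<bar>/(a+2)" if "a \<le> u" "u \<le> v" for u v
  proof -
    have "ln (v+2) - ln (u+2) \<le> ((v+2) - (u+2))/(u+2)" using that assms by (intro ln_diff_le) auto
    also have "\<dots> = (v - u)/(u+2)" by simp
    also have "\<dots> \<le> (v - u)/(a+2)" using that assms by (intro divide_left_mono) auto
    finally have "ln (v+2) - ln (u+2) \<le> (v - u)/(a+2)" .
    moreover have "ln (u+2) \<le> ln (v+2)" using that assms by simp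
    ultimately show ?thesis using that by (simp add: abs_if)
  qed
  show ?thesis
  proof (cases "u \<le> v")
    case True then show ?thesis using *[of u v] assms by simp
  next
    case False then show ?thesis using *[of v u] assms by (simp add: abs_minus_commute)
  qed
qed

lemma rho2_lip:
  assumes a: "0 \<le> a" "a \<le> u" "u \<le> b" "a \<le> v" "v \<le> b"
  shows "\<bar>rho2 u - rho2 v\<bar> \<le> 12 * (1 + pi/ln 2 * ln (b+2)) * (\<bar>u - v\<bar>/(a+2))"
proof -
  define U where "U = u + 2"
  define V where "V = v + 2"
  define cU where "cU = max 0 (cos (pi * log 2 U))"
  define cV where "cV = max 0 (cos (pi * log 2 V))"
  define w where "w = \<bar>u - v\<bar>/(a+2)"
  have w0: "w \<ge> 0" using a by (simp add: w_def)
  have ru: "rho2 u = 12 * (ln U * cU)" using a by (simp add: rho2_def U_def cU_def)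
  have rv: "rho2 v = 12 * (ln V * cV)" using a by (simp add: rho2_def V_def cV_def)
  have cU: "0 \<le> cU" "cU \<le> 1" by (auto simp: cU_def)
  have lnd: "\<bar>ln U - ln V\<bar> \<le> w" unfolding U_def V_def w_def using ln_lip[of a u v] a by simp
  have lnV: "0 \<le> ln V" "ln V \<le> ln (b+2)" using a by (auto simp: V_def)
  have cd: "\<bar>cU - cV\<bar> \<le> pi/ln 2 * w"
  proof -
    have "\<bar>cU - cV\<bar> \<le> \<bar>cos (pi * log 2 U) - cos (pi * log 2 V)\<bar>" unfolding cU_def cV_def by (rule max0_lip)
    also have "\<dots> \<le> \<bar>pi * log 2 U - pi * log 2 V\<bar>" by (rule cos_lip)
    also have "\<dots> = pi/ln 2 * \<bar>ln U - ln V\<bar>"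
      by (simp add: log_def abs_mult diff_divide_distrib[symmetric] right_diff_distrib[symmetric])
    also have "\<dots> \<le> pi/ln 2 * w" using lnd by (intro mult_left_mono) auto
    finally show ?thesis .
  qed
  have eqn: "rho2 u - rho2 v = 12 * ((ln U - ln V) * cU + ln V * (cU - cV))"
    unfolding ru rv by (simp add: algebra_simps)
  have e: "\<bar>rho2 u - rho2 v\<bar> = 12 * \<bar>(ln U - ln V) * cU + ln V * (cU - cV)\<bar>"
    unfolding eqn abs_mult by simp
  have "\<bar>(ln U - ln V) * cU + ln V * (cU - cV)\<bar> \<le> \<bar>(ln U - ln V) * cU\<bar> + \<bar>ln V * (cU - cV)\<bar>"
    by (rule abs_triangle_ineq)
  also have "\<dots> = \<bar>ln U - ln V\<bar> * cU + ln V * \<bar>cU - cV\<bar>" using cU lnV by (simp add: abs_mult)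
  finally have "\<bar>rho2 u - rho2 v\<bar> \<le> 12 * (\<bar>ln U - ln V\<bar> * cU + ln V * \<bar>cU - cV\<bar>)" unfolding e by simp
  also have "\<dots> \<le> 12 * (w * 1 + ln (b+2) * (pi/ln 2 * w))"
    using lnd cd cU lnV w0 by (intro mult_left_mono add_mono mult_mono) auto
  also have "\<dots> = 12 * (1 + pi/ln 2 * ln (b+2)) * w" by (simp add: algebra_simps)
  finally show ?thesis by (simp add: w_def)
qed

lemma sig2_ratio:
  assumes "0 \<le> a" "a \<le> u" "u \<le> b" "a \<le> v" "v \<le> b" "b - a \<le> W"
  shows "sig2 u \<le> exp (12 * (1 + pi/ln 2 * ln (b+2)) * (W/(a+2))) * sig2 v"
proof -
  have "\<bar>u - v\<bar> \<le> W" using assms by linarith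
  then have "\<bar>u - v\<bar>/(a+2) \<le> W/(a+2)" using assms by (intro divide_right_mono) auto
  moreover have "0 \<le> 12 * (1 + pi/ln 2 * ln (b+2))" using assms by (intro mult_nonneg_nonneg add_nonneg_nonneg) auto
  ultimately have "\<bar>rho2 u - rho2 v\<bar> \<le> 12 * (1 + pi/ln 2 * ln (b+2)) * (W/(a+2))"
    using rho2_lip[OF assms(1-5)] by (meson mult_left_mono order_trans)
  then have "rho2 v - rho2 u \<le> 12 * (1 + pi/ln 2 * ln (b+2)) * (W/(a+2))" by linarith
  then have "exp (- rho2 u) \<le> exp (12 * (1 + pi/ln 2 * ln (b+2)) * (W/(a+2))) * exp (- rho2 v)"
    by (simp add: exp_add[symmetric])
  then show ?thesis by (simp add: sig2_def)
qed

lemma tau2_lim: "filterlim tau2 at_top at_top"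
  unfolding filterlim_at_top
proof
  fix Z :: real
  define k where "k = nat \<lceil>4*Z\<rceil>"
  define m where "m = 2*k + 3"
  have om: "odd m" by (simp add: m_def)
  define a where "a = (2::real)^m - 2"
  define b where "b = (2::real)^m * (5/4) - 2"
  have "(2::real)^1 \<le> 2^m" by (intro power_increasing) (auto simp: m_def)
  then have p: "(2::real)^m \<ge> 2" by simp
  have a0: "a \<ge> 0" "a \<le> b" using p by (auto simp: a_def b_def)
  have "tau2 b - tau2 a = integral {a..b} sig2" by (rule tau2_diff[OF a0])
  also have "\<dots> \<ge> 1 * (b - a)"
  proof (intro integral_bounds(1))
    fix u assume u: "a \<le> u" "u \<le> b"
    have "sig2 u = 1" by (rule sig2_odd[OF om]) (use u a0 in \<open>auto simp: a_def b_def\<close>)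
    then show "1 \<le> sig2 u \<and> sig2 u \<le> 1" by simp
  qed (use a0 in auto)
  finally have "tau2 b \<ge> (2::real)^m / 4" using tau2_nonneg[of a] by (simp add: a_def b_def)
  moreover have "(2::real)^m / 4 \<ge> Z"
  proof -
    have "real m < real (2^m)" using less_exp[of m] by (simp only: of_nat_less_iff)
    then have "real m < 2^m" by simp
    then have "real m / 4 \<le> 2^m / 4" by simp
    moreover have "Z \<le> real m / 4"
    proof -
      have "4*Z \<le> real k" unfolding k_def by (rule real_nat_ceiling_ge)
      then show ?thesis unfolding m_def by simp
    qed
    ultimately show ?thesis by linarith
  qed
  ultimately have tb: "tau2 b \<ge> Z" by linarith
  show "\<forall>\<^sub>F x in at_top. Z \<le> tau2 x"
    using eventually_ge_at_top[of b]
  proof eventually_elim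
    case (elim x) then show ?case using tau2_mono[of b x] tb by linarith
  qed
qed



definition F2 :: "real measure" where
  "F2 = interval_measure (\<lambda>x. 1 - 1/(1 + tau2 x))"

lemmas F2_tc = tc[of tau2, OF tau2_mono tau2_rc tau2_nonpos tau2_lim, folded F2_def]

lemma F2_dist: "real_distribution F2" and F2_neg: "measure F2 {..<0} = 0"
  using F2_tc by auto

lemma F2_Fint: "d \<ge> 0 \<Longrightarrow> x \<ge> 0 \<Longrightarrow>
   Fint F2 d x = integral {x..x+d} sig2 / ((1 + tau2 x)*(1 + tau2 (x+d)))"
  using F2_tc(3)[of d x] tau2_diff[of x "x+d"] by simp

lemma tau2_near: assumes "0 \<le> x" "0 \<le> y" "\<bar>y - x\<bar> \<le> t" shows "tau2 x - t \<le> tau2 y" "tau2 y \<le> tau2 x + t"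
proof -
  have "tau2 x - t \<le> tau2 y \<and> tau2 y \<le> tau2 x + t"
  proof (cases "x \<le> y")
    case True then show ?thesis using tau2_inc[of x y] assms by (auto simp: abs_le_iff)
  next
    case False then show ?thesis using tau2_inc[of y x] assms by (auto simp: abs_le_iff)
  qed
  then show "tau2 x - t \<le> tau2 y" "tau2 y \<le> tau2 x + t" by auto
qed

lemma frac_aux: "a \<noteq> 0 \<Longrightarrow> b \<noteq> 0 \<Longrightarrow> D1 \<noteq> 0 \<Longrightarrow> D2 \<noteq> 0 \<Longrightarrow> (a*c/D1)/(a*b/D2) = (c/b)*(D2/(D1::real))"
  by (simp add: field_simps)

lemma F2_bnd:
  assumes d: "d > 0" and t: "t > 0"
  defines "\<delta> \<equiv> \<lambda>x. 12*(1 + pi/ln 2 * ln ((x+t+d)+2)) * ((2*t+d)/((x-t)+2))"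
  defines "lo \<equiv> \<lambda>x. d * sig2 x * exp (- \<delta> x) / ((1+tau2 x+t)*(1+tau2 x+t+d))"
  defines "hi \<equiv> \<lambda>x. d * sig2 x * exp (\<delta> x) / ((1+tau2 x-t)*(1+tau2 x-t))"
  shows "\<exists>lo hi. ((\<lambda>x. hi x / lo x) \<longlongrightarrow> 1) at_top \<and>
      (\<forall>\<^sub>F x in at_top. lo x > 0 \<and> (\<forall>s. \<bar>s\<bar> \<le> t \<longrightarrow> lo x \<le> Fint F2 d (x+s) \<and> Fint F2 d (x+s) \<le> hi x))"
proof -
  have \<delta>0: "(\<delta> \<longlongrightarrow> 0) at_top" unfolding \<delta>_def using d t by real_asymp
  have g: "((\<lambda>T. ((1+T+t)*(1+T+t+d))/((1+T-t)*(1+T-t))) \<longlongrightarrow> 1) at_top"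
    using d t by real_asymp
  have g2: "((\<lambda>x. ((1+tau2 x+t)*(1+tau2 x+t+d))/((1+tau2 x-t)*(1+tau2 x-t))) \<longlongrightarrow> 1) at_top"
    by (rule filterlim_compose[OF g tau2_lim])
  have e: "((\<lambda>x. exp (\<delta> x) / exp (- \<delta> x)) \<longlongrightarrow> exp 0 / exp (- 0)) at_top"
    by (intro tendsto_intros \<delta>0) simp
  have lim: "((\<lambda>x. exp (\<delta> x) / exp (- \<delta> x) * (((1+tau2 x+t)*(1+tau2 x+t+d))/((1+tau2 x-t)*(1+tau2 x-t)))) \<longlongrightarrow> 1 * 1) at_top"
    using e g2 by (intro tendsto_mult) auto
  have ev1: "\<forall>\<^sub>F x in at_top. tau2 x \<ge> t" using tau2_lim by (simp add: filterlim_at_top)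
  have eq: "\<forall>\<^sub>F x in at_top. hi x / lo x = exp (\<delta> x) / exp (- \<delta> x) * (((1+tau2 x+t)*(1+tau2 x+t+d))/((1+tau2 x-t)*(1+tau2 x-t)))"
    using ev1
  proof eventually_elim
    case (elim x)
    have p1: "1 + tau2 x - t > 0" using elim by simp
    have p2: "(1+tau2 x+t)*(1+tau2 x+t+d) > 0" using tau2_nonneg[of x] t d by (intro mult_pos_pos) linarith+
    have sp: "sig2 x > 0" by (rule sig2_pos)
    show ?case unfolding hi_def lo_def using p1 p2 sp d by (intro frac_aux) auto
  qed
  have A: "((\<lambda>x. hi x / lo x) \<longlongrightarrow> 1) at_top"
    using lim by (simp add: tendsto_cong[OF eq])
  have B: "\<forall>\<^sub>F x in at_top. lo x > 0 \<and> (\<forall>s. \<bar>s\<bar> \<le> t \<longrightarrow> lo x \<le> Fint F2 d (x+s) \<and> Fint F2 d (x+s) \<le> hi x)"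
    using ev1 eventually_ge_at_top[of t]
  proof eventually_elim
    case (elim x)
    define T where "T = tau2 x"
    have x0: "x - t \<ge> 0" using elim by simp
    have T0: "T \<ge> 0" by (simp add: T_def tau2_nonneg)
    have sp: "sig2 x > 0" by (rule sig2_pos)
    have lop: "lo x > 0" unfolding lo_def using d sp T0 t by (simp add: T_def[symmetric] add_pos_nonneg)
    show ?case
    proof (intro conjI allI impI lop)
      fix s assume s: "\<bar>s\<bar> \<le> t"
      define y where "y = x + s"
      have y: "x - t \<le> y" "y \<le> x + t" "y \<ge> 0" using s x0 by (auto simp: y_def abs_le_iff)
      have sb: "exp (- \<delta> x) * sig2 x \<le> sig2 u \<and> sig2 u \<le> exp (\<delta> x) * sig2 x" if u: "y \<le> u" "u \<le> y + d" for u
      proof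
        have r: "(x+t+d) - (x-t) \<le> 2*t+d" by simp
        have "sig2 u \<le> exp (\<delta> x) * sig2 x"
          unfolding \<delta>_def using sig2_ratio[OF x0 _ _ _ _ r, of u x] u y t d by simp
        then show "sig2 u \<le> exp (\<delta> x) * sig2 x" .
        have "sig2 x \<le> exp (\<delta> x) * sig2 u"
          unfolding \<delta>_def using sig2_ratio[OF x0 _ _ _ _ r, of x u] u y t d by simp
        then have "exp (- \<delta> x) * sig2 x \<le> exp (- \<delta> x) * (exp (\<delta> x) * sig2 u)" by simp
        also have "\<dots> = sig2 u" by (simp add: exp_minus field_simps)
        finally show "exp (- \<delta> x) * sig2 x \<le> sig2 u" .
      qed
      have N: "exp (- \<delta> x) * sig2 x * d \<le> integral {y..y+d} sig2" "integral {y..y+d} sig2 \<le> exp (\<delta> x) * sig2 x * d"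
        using integral_bounds[of y "y+d" "exp (- \<delta> x) * sig2 x" "exp (\<delta> x) * sig2 x"] sb d by auto
      have ty: "T - t \<le> tau2 y" "tau2 y \<le> T + t" using tau2_near[of x y t] y elim unfolding T_def by (auto simp: abs_le_iff)
      have tyd: "T - t \<le> tau2 (y+d)" "tau2 (y+d) \<le> T + t + d"
      proof -
        have "tau2 y \<le> tau2 (y+d)" using d by (intro tau2_mono) simp
        then show "T - t \<le> tau2 (y+d)" using ty by simp
        have "tau2 (y+d) \<le> T + (t+d)" using tau2_near[of x "y+d" "t+d"] y elim d unfolding T_def by (auto simp: abs_le_iff)
        then show "tau2 (y+d) \<le> T + t + d" by simp
      qed
      have F: "Fint F2 d (x+s) = integral {y..y+d} sig2 / ((1 + tau2 y)*(1 + tau2 (y+d)))"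
        using F2_Fint[of d y] d y by (simp add: y_def)
      have den0: "0 < (1 + tau2 y)*(1 + tau2 (y+d))" using tau2_nonneg[of y] tau2_nonneg[of "y+d"] by (simp add: add_pos_nonneg)
      have Nn: "0 \<le> integral {y..y+d} sig2" using N(1) sp d by (smt (verit) exp_gt_zero mult_pos_pos)
      show "lo x \<le> Fint F2 d (x+s)" unfolding F lo_def T_def[symmetric]
      proof (rule frac_le)
        show "0 \<le> integral {y..y+d} sig2" by (rule Nn)
        show "d * sig2 x * exp (- \<delta> x) \<le> integral {y..y+d} sig2" using N(1) by (simp add: mult_ac)
        show "0 < (1 + tau2 y)*(1 + tau2 (y+d))" by (rule den0)
        show "(1 + tau2 y)*(1 + tau2 (y+d)) \<le> (1+T+t)*(1+T+t+d)"
          using ty tyd tau2_nonneg[of y] tau2_nonneg[of "y+d"] by (intro mult_mono) auto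
      qed
      show "Fint F2 d (x+s) \<le> hi x" unfolding F hi_def T_def[symmetric]
      proof (rule frac_le)
        show "0 \<le> d * sig2 x * exp (\<delta> x)" using d sp by simp
        show "integral {y..y+d} sig2 \<le> d * sig2 x * exp (\<delta> x)" using N(2) by (simp add: mult_ac)
        show "0 < (1+T-t)*(1+T-t)" using elim unfolding T_def by simp
        show "(1+T-t)*(1+T-t) \<le> (1 + tau2 y)*(1 + tau2 (y+d))"
          using ty tyd elim unfolding T_def by (intro mult_mono) auto
      qed
    qed
  qed
  show ?thesis by (intro exI[of _ lo] exI[of _ hi] conjI A B)
qed

lemma F2_L: assumes d: "d > 0" shows "L_Delta F2 d"
proof (rule L_by_bounds)
  show "\<forall>\<^sub>F x in at_top. Fint F2 d x > 0"
  proof -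
    obtain lo hi where "\<forall>\<^sub>F x in at_top. lo x > 0 \<and> (\<forall>s. \<bar>s\<bar> \<le> 1 \<longrightarrow> lo x \<le> Fint F2 d (x+s) \<and> Fint F2 d (x+s) \<le> hi x)"
      using F2_bnd[OF d zero_less_one] by blast
    then show ?thesis
    proof eventually_elim
      case (elim x) then show ?case by (auto dest: spec[of _ 0])
    qed
  qed
next
  fix t :: real assume t: "t > 0"
  show "\<exists>lo hi. ((\<lambda>x. hi x / lo x) \<longlongrightarrow> 1) at_top \<and>
      (\<forall>\<^sub>F x in at_top. lo x > 0 \<and> (\<forall>s. \<bar>s\<bar> \<le> t \<longrightarrow> lo x \<le> Fint F2 d (x+s) \<and> Fint F2 d (x+s) \<le> hi x))"
    by (rule F2_bnd[OF d t])
qed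



lemma pow2_facts:
  fixes j :: nat
  shows "(2::real)^(2*j) > 2*real j" "j \<ge> 1 \<Longrightarrow> (2::real)^(2*j-1) = 2^(2*j)/2"
    "(2::real)^(2*j+1) = 2*2^(2*j)" "j \<ge> 1 \<Longrightarrow> (2::real)^(2*j) \<ge> 4" "j \<ge> 2 \<Longrightarrow> (2::real)^(2*j) \<ge> 16"
proof -
  have "real (2*j) < real (2^(2*j))" using less_exp[of "2*j"] by (simp only: of_nat_less_iff)
  then show "(2::real)^(2*j) > 2*real j" by simp
  show "j \<ge> 1 \<Longrightarrow> (2::real)^(2*j-1) = 2^(2*j)/2"
    using power_minus_mult[of "2*j" "2::real"] by simp
  show "(2::real)^(2*j+1) = 2*2^(2*j)" by simp
  show "j \<ge> 1 \<Longrightarrow> (2::real)^(2*j) \<ge> 4"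
  proof -
    assume "j \<ge> 1"
    then have "(2::real)^2 \<le> 2^(2*j)" by (intro power_increasing) auto
    then show ?thesis by simp
  qed
  show "j \<ge> 2 \<Longrightarrow> (2::real)^(2*j) \<ge> 16"
  proof -
    assume "j \<ge> 2"
    then have "(2::real)^4 \<le> 2^(2*j)" by (intro power_increasing) auto
    then show ?thesis by simp
  qed
qed

lemma F2_dip:
  fixes j :: nat
  assumes j: "j \<ge> 1"
  defines "P \<equiv> (2::real)^(2*j)"
  shows "Fint F2 1 (P - 2) \<le> 1/P^6"
proof -
  have P4: "P \<ge> 4" using pow2_facts(4)[OF j] by (simp add: P_def)
  define x where "x = P - 2"
  have x0: "x \<ge> 0" using P4 by (simp add: x_def)
  have N: "integral {x..x+1} sig2 \<le> 1/P^6 * ((x+1) - x)"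
  proof (rule integral_bounds(2)[of _ _ 0])
    fix u assume u: "x \<le> u" "u \<le> x+1"
    have "sig2 u \<le> 1/(u+2)^6"
      by (rule sig2_even[of "2*j"]) (use u x0 P4 in \<open>auto simp: x_def P_def\<close>)
    also have "\<dots> \<le> 1/P^6" using u P4 by (intro divide_left_mono power_mono) (auto simp: x_def)
    finally show "0 \<le> sig2 u \<and> sig2 u \<le> 1/P^6" using sig2_pos[of u] by simp
  qed simp
  have den: "1 \<le> (1 + tau2 x)*(1 + tau2 (x+1))"
    using tau2_nonneg[of x] tau2_nonneg[of "x+1"] by (smt (verit) mult_le_cancel_left1)
  have Nn: "integral {x..x+1} sig2 \<ge> 0" using integral_bounds(1)[of x "x+1" 0 1] sig2_pos sig2_le1 by (auto simp: less_imp_le)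
  have "Fint F2 1 x = integral {x..x+1} sig2 / ((1 + tau2 x)*(1 + tau2 (x+1)))"
    using F2_Fint[of 1 x] x0 by simp
  also have "\<dots> \<le> integral {x..x+1} sig2 / 1" using den Nn by (intro divide_left_mono) auto
  also have "\<dots> \<le> 1/P^6" using N by simp
  finally show ?thesis by (simp add: x_def)
qed

lemma F2_half:
  fixes j :: nat
  assumes j: "j \<ge> 2"
  defines "P \<equiv> (2::real)^(2*j)"
  shows "Fint F2 (1/2) ((P - 2)/2) \<ge> 1/(2*P^2)"
proof -
  have P16: "P \<ge> 16" using pow2_facts(5)[OF j] by (simp add: P_def)
  have Pm: "(2::real)^(2*j-1) = P/2" using pow2_facts(2)[of j] j by (simp add: P_def)
  have om: "odd (2*j-1)" using j by simp
  define z where "z = (P - 2)/2"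
  have z0: "z \<ge> 0" using P16 by (simp add: z_def)
  have zz: "z = P/2 - 1" by (simp add: z_def field_simps)
  have s1: "sig2 u = 1" if u: "z \<le> u" "u \<le> z + 1/2" for u
  proof (rule sig2_odd[OF om])
    show "0 \<le> u" using u z0 by linarith
    show "2^(2*j-1) \<le> u + 2" unfolding Pm using u zz by linarith
    show "u + 2 \<le> 2^(2*j-1) * (5/4)" unfolding Pm using u P16 zz by linarith
  qed
  have N: "1 * ((z + 1/2) - z) \<le> integral {z..z+1/2} sig2"
    by (rule integral_bounds(1)[of _ _ _ 1]) (use s1 in auto)
  have den: "(1 + tau2 z)*(1 + tau2 (z+1/2)) \<le> P*P"
  proof (intro mult_mono)
    show "1 + tau2 z \<le> P" using tau2_le[OF z0] P16 zz by linarith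
    show "1 + tau2 (z+1/2) \<le> P" using tau2_le[of "z+1/2"] z0 P16 zz by linarith
  qed (use tau2_nonneg[of z] tau2_nonneg[of "z+1/2"] P16 in auto)
  have den0: "0 < (1 + tau2 z)*(1 + tau2 (z+1/2))"
    using tau2_nonneg[of z] tau2_nonneg[of "z+1/2"] by (simp add: add_pos_nonneg)
  have "1/(2*P^2) = (1/2)/(P*P)" by (simp add: power2_eq_square)
  also have "\<dots> \<le> integral {z..z+1/2} sig2 / ((1 + tau2 z)*(1 + tau2 (z+1/2)))"
    by (rule frac_le) (use N den den0 in auto)
  also have "\<dots> = Fint F2 (1/2) z" using F2_Fint[of "1/2" z] z0 by simp
  finally show ?thesis by (simp add: z_def)
qed

lemma F2_peak:
  fixes j :: nat
  assumes j: "j \<ge> 1"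
  defines "P \<equiv> (2::real)^(2*j)"
  shows "Fint F2 1 (2*P - 2) \<ge> 1/(4*P^2)"
proof -
  have P4: "P \<ge> 4" using pow2_facts(4)[OF j] by (simp add: P_def)
  have Pm: "(2::real)^(2*j+1) = 2*P" using pow2_facts(3)[of j] by (simp add: P_def)
  have om: "odd (2*j+1)" by simp
  define y where "y = 2*P - 2"
  have y0: "y \<ge> 0" using P4 by (simp add: y_def)
  have s1: "sig2 u = 1" if u: "y \<le> u" "u \<le> y + 1" for u
  proof (rule sig2_odd[OF om])
    show "0 \<le> u" using u y0 by linarith
    show "2^(2*j+1) \<le> u + 2" unfolding Pm using u unfolding y_def by linarith
    show "u + 2 \<le> 2^(2*j+1) * (5/4)" unfolding Pm using u P4 unfolding y_def by linarith
  qed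
  have N: "1 * ((y + 1) - y) \<le> integral {y..y+1} sig2"
    by (rule integral_bounds(1)[of _ _ _ 1]) (use s1 in auto)
  have den: "(1 + tau2 y)*(1 + tau2 (y+1)) \<le> (2*P)*(2*P)"
  proof (intro mult_mono)
    show "1 + tau2 y \<le> 2*P" using tau2_le[OF y0] P4 by (simp add: y_def)
    show "1 + tau2 (y+1) \<le> 2*P" using tau2_le[of "y+1"] y0 P4 by (simp add: y_def)
  qed (use tau2_nonneg[of y] tau2_nonneg[of "y+1"] P4 in auto)
  have den0: "0 < (1 + tau2 y)*(1 + tau2 (y+1))"
    using tau2_nonneg[of y] tau2_nonneg[of "y+1"] by (simp add: add_pos_nonneg)
  have "1/(4*P^2) = 1/((2*P)*(2*P))" by (simp add: power2_eq_square)
  also have "\<dots> \<le> integral {y..y+1} sig2 / ((1 + tau2 y)*(1 + tau2 (y+1)))"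
    by (rule frac_le) (use N den den0 in auto)
  also have "\<dots> = Fint F2 1 y" using F2_Fint[of 1 y] y0 by simp
  finally show ?thesis by (simp add: y_def)
qed



lemma F2_Lloc: "L_loc F2"
  unfolding L_loc_def using F2_L by blast

lemma pick_j:
  fixes N :: real
  obtains j :: nat where "j \<ge> 2" "(2::real)^(2*j) \<ge> N + 2"
proof -
  define j where "j = nat \<lceil>N\<rceil> + 2"
  have "N \<le> real (nat \<lceil>N\<rceil>)" by (rule real_nat_ceiling_ge)
  then have "N + 2 \<le> real j" by (simp add: j_def)
  also have "\<dots> \<le> 2^(2*j)" using pow2_facts(1)[of j] of_nat_0_le_iff[of j] by linarith
  finally show ?thesis using that[of j] by (simp add: j_def)
qed

lemma F2_not_S: "\<not> S_loc F2"
proof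
  assume "S_loc F2"
  then have "S_Delta F2 1" unfolding S_loc_def by simp
  then have lim: "((\<lambda>x. Fint (F2 \<star> F2) 1 x / (2 * Fint F2 1 x)) \<longlongrightarrow> 1) at_top"
    unfolding S_Delta_def by simp
  have "\<forall>\<^sub>F x in at_top. dist (Fint (F2 \<star> F2) 1 x / (2 * Fint F2 1 x)) 1 < 1/2"
    using tendstoD[OF lim, of "1/2"] by simp
  then obtain N where N: "\<And>x. x \<ge> N \<Longrightarrow> dist (Fint (F2 \<star> F2) 1 x / (2 * Fint F2 1 x)) 1 < 1/2"
    unfolding eventually_at_top_linorder by blast
  obtain j :: nat where j: "j \<ge> 2" "(2::real)^(2*j) \<ge> N + 2" by (rule pick_j)
  define P where "P = (2::real)^(2*j)"
  define x where "x = P - 2"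
  have P16: "P \<ge> 16" using pow2_facts(5)[OF j(1)] by (simp add: P_def)
  have a: "Fint F2 1 x \<le> 1/P^6" using F2_dip[of j] j by (simp add: x_def P_def)
  have a0: "Fint F2 1 x \<ge> 0" by (simp add: Fint_def)
  have h: "Fint F2 (1/2) (x/2) \<ge> 1/(2*P^2)" using F2_half[OF j(1)] by (simp add: x_def P_def)
  have D: "Fint (F2 \<star> F2) 1 x \<ge> 1/(4*P^4)"
  proof -
    have pp: "(P^2)^2 = P^4" by (simp flip: power_mult)
    have "(1/(2*P^2))^2 = 1/(4*(P^2)^2)" by (simp add: power_divide power_mult_distrib)
    then have "1/(4*P^4) = (1/(2*P^2))^2" using pp by simp
    also have "\<dots> \<le> (Fint F2 (1/2) (x/2))^2" using h P16 by (intro power_mono) auto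
    also have "\<dots> \<le> Fint (F2 \<star> F2) 1 x" by (rule conv_box[OF F2_dist])
    finally show ?thesis .
  qed
  have d: "dist (Fint (F2 \<star> F2) 1 x / (2 * Fint F2 1 x)) 1 < 1/2" using N j by (simp add: x_def P_def)
  show False
  proof (cases "Fint F2 1 x = 0")
    case True then show False using d by simp
  next
    case False
    then have ap: "Fint F2 1 x > 0" using a0 by simp
    have "(1/(4*P^4)) / (2*(1/P^6)) \<le> Fint (F2 \<star> F2) 1 x / (2 * Fint F2 1 x)"
      by (rule frac_le) (use D ap a P16 in \<open>auto simp: Fint_def\<close>)
    moreover have "(1/(4*P^4)) / (2*(1/P^6)) = P^2/8" using P16 by (simp add: field_simps power_eq_if)
    moreover have "P^2/8 \<ge> 2"
    proof -
      have "P*P \<ge> 16*16" using P16 by (intro mult_mono) auto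
      then show ?thesis by (simp add: power2_eq_square)
    qed
    ultimately have "Fint (F2 \<star> F2) 1 x / (2 * Fint F2 1 x) \<ge> 2" by linarith
    then show False using d by (simp add: dist_real_def)
  qed
qed

lemma F2_not_lad: "\<not> loc_almost_decreasing F2"
proof
  assume "loc_almost_decreasing F2"
  then obtain x0 C where pos: "\<And>x. x \<ge> x0 \<Longrightarrow> Fint F2 1 x > 0"
    and C: "\<And>x y. x0 \<le> x \<Longrightarrow> x \<le> y \<Longrightarrow> Fint F2 1 y / Fint F2 1 x \<le> C"
    unfolding loc_almost_decreasing_def by (metis zero_less_one)
  obtain j :: nat where j: "j \<ge> 2" "(2::real)^(2*j) \<ge> max x0 C + 2" by (rule pick_j)
  define P where "P = (2::real)^(2*j)"
  have P16: "P \<ge> 16" using pow2_facts(5)[OF j(1)] by (simp add: P_def)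
  have Px: "P - 2 \<ge> x0" "P > C" using j by (auto simp: P_def)
  have a: "Fint F2 1 (P - 2) \<le> 1/P^6" using F2_dip[of j] j by (simp add: P_def)
  have ap: "Fint F2 1 (P - 2) > 0" using pos Px by simp
  have b: "Fint F2 1 (2*P - 2) \<ge> 1/(4*P^2)" using F2_peak[of j] j by (simp add: P_def)
  have "(1/(4*P^2)) / (1/P^6) \<le> Fint F2 1 (2*P - 2) / Fint F2 1 (P - 2)"
    by (rule frac_le) (use a ap b P16 in \<open>auto simp: Fint_def\<close>)
  also have "\<dots> \<le> C" using C[of "P - 2" "2*P - 2"] Px P16 by simp
  finally have "(1/(4*P^2)) / (1/P^6) \<le> C" .
  moreover have "(1/(4*P^2)) / (1/P^6) = P^4/4" using P16 by (simp add: field_simps power_eq_if)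
  moreover have "P^4/4 \<ge> P"
  proof -
    have "P^4 = P * P^3" by (simp add: power_eq_if)
    moreover have "P^3 \<ge> 4"
    proof -
      have "P*P \<ge> 16*16" using P16 by (intro mult_mono) auto
      then have "P*P*P \<ge> (16*16)*16" using P16 by (intro mult_mono) auto
      then show ?thesis by (simp add: power3_eq_cube)
    qed
    ultimately have "P^4 \<ge> P * 4" using P16 by (simp add: mult_left_mono)
    then show ?thesis by simp
  qed
  ultimately show False using Px by linarith
qed

theorem corollary1p1:
  shows "(\<exists>F. real_distribution F \<and> measure F {..<0} = 0 \<and>
            S_loc F \<and> \<not> loc_almost_decreasing F) \<and>
         (\<exists>F. real_distribution F \<and> measure F {..<0} = 0 \<and>
            L_loc F \<and> \<not> S_loc F \<and> \<not> loc_almost_decreasing F)"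
  using F1_dist F1_neg F1_S F1_not_lad F2_dist F2_neg F2_Lloc F2_not_S F2_not_lad by blast


end
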